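(* Let $\mathcal F$ be a set of oriented trees which is a complete set of obstructions for a digraph $H$. Then $\mathrm{Sproink}(\mathcal F)=\bigcup_{T\in\mathcal F}\mathrm{Sproink}(T)$ is a complete set of obstructions for the arc graph $\delta H$.
   Context: Digraphs are finite, $G=(V,A)$ with $A\subseteq V\times V$; homomorphisms are arc-preserving vertex maps, $G\to H$ means one exists. A set $\mathcal F$ of digraphs is a complete set of obstructions for $H$ if for every digraph $G$: $G\to H$ iff no $F\in\mathcal F$ satisfies $F\to G$. An oriented tree is a digraph whose underlying undirected graph is a tree. The arc graph of $G=(V,A)$ is $\delta G=(A,\delta A)$ with $\delta A=\{((u,v),(v,w)) : (u,v),(v,w)\in A\}$. A tree $F$ has height at most one if its vertex set is partitioned into two sets $0_F,1_F$ such that every arc $(x,y)$ of $F$ has $x\in 0_F$, $y\in 1_F$ (if $F$ has no arcs, it is a single vertex lying in one of the two sets). Sproinks: let $T$ be an oriented tree. For every vertex $u$ of $T$ choose a tree $F(u)$ of height at most one (with a partition $0_{F(u)},1_{F(u)}$), the $F(u)$ pairwise disjoint. For every arc $e$ of $T$ incident with $u$ fix a vertex $v(e,F(u))$ of $F(u)$ with $v(e,F(u))\in 1_{F(u)}$ if $u$ is the initial vertex of $e$ and $v(e,F(u))\in 0_{F(u)}$ if $u$ is the terminal vertex of $e$. The tree obtained from the disjoint union of all $F(u)$ by identifying $v(e,F(u))$ with $v(e,F(u'))$ for every arc $e=(u,u')$ of $T$ is a sproink of $T$; $\mathrm{Sproink}(T)$ is the set of all sproinks of $T$. *)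

theory Defs
  imports Main
begin

type_synonym 'a digraph = "'a set \<times> ('a \<times> 'a) set"

abbreviation verts :: "'a digraph \<Rightarrow> 'a set" where "verts G \<equiv> fst G"
abbreviation arcs :: "'a digraph \<Rightarrow> ('a \<times> 'a) set" where "arcs G \<equiv> snd G"

definition digraph :: "'a digraph \<Rightarrow> bool" where
  "digraph G \<longleftrightarrow> finite (verts G) \<and> arcs G \<subseteq> verts G \<times> verts G"

definition is_hom :: "'a digraph \<Rightarrow> 'b digraph \<Rightarrow> ('a \<Rightarrow> 'b) \<Rightarrow> bool" where
  "is_hom G H f \<longleftrightarrow> (\<forall>x\<in>verts G. f x \<in> verts H) \<and>
                     (\<forall>(x,y)\<in>arcs G. (f x, f y) \<in> arcs H)"

definition hom_to :: "'a digraph \<Rightarrow> 'b digraph \<Rightarrow> bool" (infix "\<rightarrow>\<^sub>h" 50) where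
  "G \<rightarrow>\<^sub>h H \<longleftrightarrow> (\<exists>f. is_hom G H f)"

text \<open>The test digraphs G range over digraphs with
  vertices in nat; every finite digraph is isomorphic to such a one and the
  relation \<open>\<rightarrow>\<^sub>h\<close> is invariant under isomorphism.\<close>
definition complete_obstructions :: "'f digraph set \<Rightarrow> 'h digraph \<Rightarrow> bool" where
  "complete_obstructions \<F> H \<longleftrightarrow>
     (\<forall>G :: nat digraph. digraph G \<longrightarrow> (G \<rightarrow>\<^sub>h H \<longleftrightarrow> \<not> (\<exists>F\<in>\<F>. F \<rightarrow>\<^sub>h G)))"

definition oriented_tree :: "'a digraph \<Rightarrow> bool" where
  "oriented_tree T \<longleftrightarrow> digraph T \<and> verts T \<noteq> {} \<and>
     (\<forall>(x,y)\<in>arcs T. x \<noteq> y \<and> (y,x) \<notin> arcs T) \<and>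
     (\<forall>x\<in>verts T. \<forall>y\<in>verts T. (x,y) \<in> (arcs T \<union> (arcs T)\<inverse>)\<^sup>*) \<and>
     card (arcs T) + 1 = card (verts T)"

definition arc_graph :: "'a digraph \<Rightarrow> ('a \<times> 'a) digraph" where
  "arc_graph G = (arcs G, {(a, b). a \<in> arcs G \<and> b \<in> arcs G \<and> snd a = fst b})"

text \<open>Tree of height at most one w.r.t. the partition (Z, verts F - Z):
  Z is the part 0_F, its complement in verts F is 1_F.\<close>
definition height_le_one :: "'a digraph \<Rightarrow> 'a set \<Rightarrow> bool" where
  "height_le_one F Z \<longleftrightarrow> oriented_tree F \<and> Z \<subseteq> verts F \<and>
     (\<forall>(x,y)\<in>arcs F. x \<in> Z \<and> y \<in> verts F - Z)"

text \<open>Sproink data for an oriented tree T: for each vertex u a tree Fu u of height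
  at most one (with 0-part Z u), and for each arc e and endpoint u of e a vertex
  vsel e u of Fu u.  The F(u) are made pairwise disjoint by tagging with u.\<close>
definition sproink_data ::
  "'t digraph \<Rightarrow> ('t \<Rightarrow> nat digraph) \<Rightarrow> ('t \<Rightarrow> nat set) \<Rightarrow> ('t \<times> 't \<Rightarrow> 't \<Rightarrow> nat) \<Rightarrow> bool" where
  "sproink_data T Fu Z vsel \<longleftrightarrow>
     (\<forall>u\<in>verts T. height_le_one (Fu u) (Z u)) \<and>
     (\<forall>e\<in>arcs T. vsel e (fst e) \<in> verts (Fu (fst e)) - Z (fst e) \<and>
                 vsel e (snd e) \<in> Z (snd e))"

definition sproink_ident ::
  "'t digraph \<Rightarrow> ('t \<times> 't \<Rightarrow> 't \<Rightarrow> nat) \<Rightarrow> (('t \<times> nat) \<times> ('t \<times> nat)) set" where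
  "sproink_ident T vsel =
     (let R = {((fst e, vsel e (fst e)), (snd e, vsel e (snd e))) | e. e \<in> arcs T}
      in (R \<union> R\<inverse>)\<^sup>*)"

definition sproink_graph ::
  "'t digraph \<Rightarrow> ('t \<Rightarrow> nat digraph) \<Rightarrow> ('t \<times> 't \<Rightarrow> 't \<Rightarrow> nat) \<Rightarrow> ('t \<times> nat) set digraph" where
  "sproink_graph T Fu vsel =
     (let E = sproink_ident T vsel in
      ({E `` {(u, x)} | u x. u \<in> verts T \<and> x \<in> verts (Fu u)},
       {(E `` {(u, x)}, E `` {(u, y)}) | u x y. u \<in> verts T \<and> (x, y) \<in> arcs (Fu u)}))"

definition Sproink :: "'t digraph \<Rightarrow> ('t \<times> nat) set digraph set" where
  "Sproink T = {sproink_graph T Fu vsel | Fu Z vsel. sproink_data T Fu Z vsel}"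

end

theory Submission
  imports Defs
begin

lemma sym_cl: "(a,b) \<in> (A \<union> A\<inverse>)\<^sup>* \<Longrightarrow> (b,a) \<in> (A \<union> A\<inverse>)\<^sup>*"
proof -
  assume "(a,b) \<in> (A \<union> A\<inverse>)\<^sup>*"
  hence "(b,a) \<in> ((A \<union> A\<inverse>)\<inverse>)\<^sup>*" by (simp add: rtrancl_converse)
  moreover have "(A \<union> A\<inverse>)\<inverse> = A \<union> A\<inverse>" by auto
  ultimately show ?thesis by simp
qed

lemma cls_eq: "(a,b) \<in> (A \<union> A\<inverse>)\<^sup>* \<Longrightarrow> (A \<union> A\<inverse>)\<^sup>* `` {a} = (A \<union> A\<inverse>)\<^sup>* `` {b}"
  by (auto intro: rtrancl_trans dest: sym_cl)

lemma resp_cl: assumes h: "\<And>a b. (a,b)\<in>A \<Longrightarrow> f a = f b" and "(x,y) \<in> (A \<union> A\<inverse>)\<^sup>*" shows "f x = f y"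
  using assms(2) by (induction rule: rtrancl_induct) (auto dest: h)

lemma map_cl: assumes h: "\<And>a b. (a,b)\<in>A \<Longrightarrow> (f a, f b) \<in> B" and "(x,y) \<in> (A \<union> A\<inverse>)\<^sup>*" shows "(f x, f y) \<in> (B \<union> B\<inverse>)\<^sup>*"
  using assms(2)
  proof (induction rule: rtrancl_induct)
    case base then show ?case by simp
  next
    case (step y z)
    then have "(f y, f z) \<in> B \<union> B\<inverse>" using h by auto
    then show ?case using step by (meson rtrancl.rtrancl_into_rtrancl)
  qed

definition map_dg :: "('a \<Rightarrow> 'b) \<Rightarrow> 'a digraph \<Rightarrow> 'b digraph" where
  "map_dg f G = (f ` verts G, map_prod f f ` arcs G)"

lemma map_dg_digraph: "digraph G \<Longrightarrow> digraph (map_dg f G)"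
  unfolding digraph_def map_dg_def by auto

lemma map_dg_into: "X \<rightarrow>\<^sub>h G \<Longrightarrow> X \<rightarrow>\<^sub>h map_dg f G"
  unfolding hom_to_def is_hom_def map_dg_def
  by (rule exE, assumption) (rule_tac x="f \<circ> _" in exI, force)
lemma map_dg_from:
  assumes "digraph G" "inj_on f (verts G)" "X \<rightarrow>\<^sub>h map_dg f G" shows "X \<rightarrow>\<^sub>h G"
proof -
  obtain k where k: "is_hom X (map_dg f G) k" using assms(3) hom_to_def by blast
  let ?g = "inv_into (verts G) f \<circ> k"
  have "is_hom X G ?g"
    unfolding is_hom_def
  proof safe
    fix x assume "x \<in> verts X"
    then have "k x \<in> f ` verts G" using k unfolding is_hom_def map_dg_def by auto
    then show "?g x \<in> verts G" by (auto intro: inv_into_into)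
  next
    fix a b assume "(a,b) \<in> arcs X"
    then have "(k a, k b) \<in> map_prod f f ` arcs G" using k unfolding is_hom_def map_dg_def by auto
    then obtain c d where cd: "(c,d) \<in> arcs G" "k a = f c" "k b = f d" by auto
    have "c \<in> verts G" "d \<in> verts G" using cd(1) assms(1) unfolding digraph_def by auto
    then show "(?g a, ?g b) \<in> arcs G" using cd assms(2) by simp
  qed
  then show ?thesis unfolding hom_to_def by blast
qed

lemma map_dg_to:
  assumes "digraph G" "inj_on f (verts G)" shows "map_dg f G \<rightarrow>\<^sub>h H \<longleftrightarrow> G \<rightarrow>\<^sub>h H"
proof
  assume "map_dg f G \<rightarrow>\<^sub>h H"
  then obtain k where k: "is_hom (map_dg f G) H k" using hom_to_def by blast
  have "is_hom G H (k \<circ> f)" using k unfolding is_hom_def map_dg_def by force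
  then show "G \<rightarrow>\<^sub>h H" unfolding hom_to_def by blast
next
  assume "G \<rightarrow>\<^sub>h H"
  then obtain k where k: "is_hom G H k" using hom_to_def by blast
  let ?g = "k \<circ> inv_into (verts G) f"
  have "is_hom (map_dg f G) H ?g"
    using k assms unfolding is_hom_def map_dg_def digraph_def by fastforce
  then show "map_dg f G \<rightarrow>\<^sub>h H" unfolding hom_to_def by blast
qed

definition Rg :: "nat digraph \<Rightarrow> ((nat \<times> bool) \<times> (nat \<times> bool)) set" where
  "Rg G = {((v,True),(w,False)) | v w. (v,w) \<in> arcs G}"

abbreviation Ecl :: "nat digraph \<Rightarrow> ((nat \<times> bool) \<times> (nat \<times> bool)) set" where
  "Ecl G \<equiv> (Rg G \<union> (Rg G)\<inverse>)\<^sup>*"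

definition LG :: "nat digraph \<Rightarrow> (nat \<times> bool) set digraph" where
  "LG G = ({Ecl G `` {(v,i)} | v i. v \<in> verts G},
           {(Ecl G `` {(v,False)}, Ecl G `` {(v,True)}) | v. v \<in> verts G})"

lemma LG_digraph: assumes "digraph G" shows "digraph (LG G)"
proof -
  have "verts (LG G) = (\<lambda>(v,i). Ecl G `` {(v,i)}) ` (verts G \<times> UNIV)"
    unfolding LG_def by auto
  then have "finite (verts (LG G))" using assms unfolding digraph_def by simp
  then show ?thesis unfolding digraph_def LG_def by auto
qed

lemma lemmaA:
  assumes "digraph H" "digraph G" shows "G \<rightarrow>\<^sub>h arc_graph H \<longleftrightarrow> LG G \<rightarrow>\<^sub>h H"
proof
  assume "G \<rightarrow>\<^sub>h arc_graph H"
  then obtain f where f: "is_hom G (arc_graph H) f" using hom_to_def by blast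
  define \<kappa> where "\<kappa> p = (if snd p then snd (f (fst p)) else fst (f (fst p)))" for p
  define k where "k C = \<kappa> (SOME p. p \<in> C)" for C
  have resp: "\<kappa> a = \<kappa> b" if "(a,b) \<in> Ecl G" for a b
    using that
  proof (rule resp_cl[rotated])
    fix a b assume "(a,b) \<in> Rg G"
    then obtain v w where "a = (v,True)" "b = (w,False)" "(v,w) \<in> arcs G" unfolding Rg_def by auto
    then show "\<kappa> a = \<kappa> b" using f unfolding \<kappa>_def is_hom_def arc_graph_def by auto
  qed
  have kcl: "k (Ecl G `` {p}) = \<kappa> p" for p
  proof -
    have "p \<in> Ecl G `` {p}" by simp
    then have "(SOME q. q \<in> Ecl G `` {p}) \<in> Ecl G `` {p}" by (rule someI)
    then show ?thesis unfolding k_def using resp by auto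
  qed
  have "is_hom (LG G) H k"
    unfolding is_hom_def
  proof safe
    fix C assume "C \<in> verts (LG G)"
    then obtain v i where vi: "v \<in> verts G" "C = Ecl G `` {(v,i)}" unfolding LG_def by auto
    then have "f v \<in> arcs H" using f unfolding is_hom_def arc_graph_def by auto
    then show "k C \<in> verts H" using vi kcl assms unfolding \<kappa>_def digraph_def by auto
  next
    fix C D assume "(C,D) \<in> arcs (LG G)"
    then obtain v where v: "v \<in> verts G" "C = Ecl G `` {(v,False)}" "D = Ecl G `` {(v,True)}"
      unfolding LG_def by auto
    then have "f v \<in> arcs H" using f unfolding is_hom_def arc_graph_def by auto
    then show "(k C, k D) \<in> arcs H" using v kcl unfolding \<kappa>_def by simp
  qed
  then show "LG G \<rightarrow>\<^sub>h H" unfolding hom_to_def by blast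
next
  assume "LG G \<rightarrow>\<^sub>h H"
  then obtain k where k: "is_hom (LG G) H k" using hom_to_def by blast
  define f where "f v = (k (Ecl G `` {(v,False)}), k (Ecl G `` {(v,True)}))" for v
  have fv: "f v \<in> arcs H" if "v \<in> verts G" for v
  proof -
    have "(Ecl G `` {(v,False)}, Ecl G `` {(v,True)}) \<in> arcs (LG G)" using that unfolding LG_def by auto
    then show ?thesis using k unfolding is_hom_def f_def by auto
  qed
  have eq: "snd (f v) = fst (f w)" if "(v,w) \<in> arcs G" for v w
  proof -
    have "((v,True),(w,False)) \<in> Rg G" using that unfolding Rg_def by auto
    then have "((v,True),(w,False)) \<in> Ecl G" by auto
    then have "Ecl G `` {(v,True)} = Ecl G `` {(w,False)}" by (rule cls_eq)
    then show ?thesis unfolding f_def by simp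
  qed
  have "is_hom G (arc_graph H) f"
    using fv eq assms(2) unfolding is_hom_def arc_graph_def digraph_def by auto
  then show "G \<rightarrow>\<^sub>h arc_graph H" unfolding hom_to_def by blast
qed

lemma B1:
  assumes dT: "digraph T" and sd: "sproink_data T Fu Z vsel"
    and hS: "sproink_graph T Fu vsel \<rightarrow>\<^sub>h G"
  shows "T \<rightarrow>\<^sub>h LG G"
proof -
  define R where "R = {((fst e, vsel e (fst e)), (snd e, vsel e (snd e))) | e. e \<in> arcs T}"
  define E where "E = (R \<union> R\<inverse>)\<^sup>*"
  have SG: "sproink_graph T Fu vsel = ({E `` {(u, x)} | u x. u \<in> verts T \<and> x \<in> verts (Fu u)},
       {(E `` {(u, x)}, E `` {(u, y)}) | u x y. u \<in> verts T \<and> (x, y) \<in> arcs (Fu u)})"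
    unfolding sproink_graph_def sproink_ident_def Let_def E_def R_def by simp
  obtain g where g: "is_hom (sproink_graph T Fu vsel) G g" using hS hom_to_def by blast
  define \<gamma> where "\<gamma> u x = g (E `` {(u,x)})" for u x
  define pt where "pt u x = (\<gamma> u x, x \<in> Z u)" for u x
  have hl: "height_le_one (Fu u) (Z u)" if "u \<in> verts T" for u using sd that unfolding sproink_data_def by auto
  have gv: "\<gamma> u x \<in> verts G" if "u \<in> verts T" "x \<in> verts (Fu u)" for u x
    using g that unfolding is_hom_def SG \<gamma>_def by auto
  have ga: "(\<gamma> u x, \<gamma> u y) \<in> arcs G" if "u \<in> verts T" "(x,y) \<in> arcs (Fu u)" for u x y
  proof -
    have "(E `` {(u,x)}, E `` {(u,y)}) \<in> arcs (sproink_graph T Fu vsel)" unfolding SG snd_conv using that by blast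
    then show ?thesis using g unfolding is_hom_def \<gamma>_def by auto
  qed
  have C1: "(pt u x, pt u y) \<in> Ecl G" if u: "u \<in> verts T" and xy: "x \<in> verts (Fu u)" "y \<in> verts (Fu u)" for u x y
  proof -
    have ot: "oriented_tree (Fu u)" using hl[OF u] unfolding height_le_one_def by auto
    then have "(x,y) \<in> (arcs (Fu u) \<union> (arcs (Fu u))\<inverse>)\<^sup>*" using xy unfolding oriented_tree_def by auto
    then show ?thesis
    proof (rule map_cl[rotated])
      fix a b assume ab: "(a,b) \<in> arcs (Fu u)"
      then have "a \<in> Z u" "b \<notin> Z u" using hl[OF u] unfolding height_le_one_def by auto
      then show "(pt u a, pt u b) \<in> Rg G" using ga[OF u ab] unfolding pt_def Rg_def by auto
    qed
  qed
  define xu where "xu u = (SOME x. x \<in> verts (Fu u))" for u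
  have xu: "xu u \<in> verts (Fu u)" if "u \<in> verts T" for u
  proof -
    have "verts (Fu u) \<noteq> {}" using hl[OF that] unfolding height_le_one_def oriented_tree_def by auto
    then show ?thesis unfolding xu_def by (simp add: some_in_eq)
  qed
  define h where "h u = Ecl G `` {pt u (xu u)}" for u
  have "is_hom T (LG G) h"
    unfolding is_hom_def
  proof safe
    fix u assume u: "u \<in> verts T"
    then show "h u \<in> verts (LG G)" using gv[OF u xu[OF u]] unfolding h_def pt_def LG_def by auto
  next
    fix u u' assume e: "(u,u') \<in> arcs T"
    then have u: "u \<in> verts T" and u': "u' \<in> verts T" using dT unfolding digraph_def by auto
    let ?s = "vsel (u,u') u" and ?s' = "vsel (u,u') u'"
    have s: "?s \<in> verts (Fu u)" "?s \<notin> Z u" and s': "?s' \<in> Z u'"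
      using sd e unfolding sproink_data_def by auto
    have s'v: "?s' \<in> verts (Fu u')" using s' hl[OF u'] unfolding height_le_one_def by auto
    have "((u,?s),(u',?s')) \<in> R" unfolding R_def using e by force
    then have "((u,?s),(u',?s')) \<in> E" unfolding E_def by auto
    then have "E `` {(u,?s)} = E `` {(u',?s')}" unfolding E_def by (rule cls_eq)
    then have geq: "\<gamma> u ?s = \<gamma> u' ?s'" unfolding \<gamma>_def by simp
    have "h u = Ecl G `` {pt u ?s}" unfolding h_def by (rule cls_eq[OF C1[OF u xu[OF u] s(1)]])
    also have "\<dots> = Ecl G `` {(\<gamma> u ?s, False)}" using s unfolding pt_def by simp
    finally have hu: "h u = Ecl G `` {(\<gamma> u ?s, False)}" .
    have "h u' = Ecl G `` {pt u' ?s'}" unfolding h_def by (rule cls_eq[OF C1[OF u' xu[OF u'] s'v]])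
    also have "\<dots> = Ecl G `` {(\<gamma> u ?s, True)}" using s' geq unfolding pt_def by simp
    finally have hu': "h u' = Ecl G `` {(\<gamma> u ?s, True)}" .
    show "(h u, h u') \<in> arcs (LG G)" using hu hu' gv[OF u s(1)] unfolding LG_def by auto
  qed
  then show ?thesis unfolding hom_to_def by blast
qed

lemma pendant_tree:
  assumes ot: "oriented_tree F" and n: "n \<notin> verts F" and x: "x \<in> verts F"
    and a: "a = (x,n) \<or> a = (n,x)"
  shows "oriented_tree (insert n (verts F), insert a (arcs F))"
proof -
  have dF: "finite (verts F)" "arcs F \<subseteq> verts F \<times> verts F" using ot unfolding oriented_tree_def digraph_def by auto
  have aF: "a \<notin> arcs F" using a n dF(2) by auto
  have finA: "finite (arcs F)" using dF finite_subset by blast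
  let ?A = "insert a (arcs F)"
  let ?S = "(?A \<union> ?A\<inverse>)\<^sup>*"
  have sub: "(arcs F \<union> (arcs F)\<inverse>)\<^sup>* \<subseteq> ?S" by (rule rtrancl_mono) auto
  have xn: "(x,n) \<in> ?S" "(n,x) \<in> ?S" using a by auto
  have old: "(y,z) \<in> ?S" if "y \<in> verts F" "z \<in> verts F" for y z
    using ot that sub unfolding oriented_tree_def by blast
  have conn: "(y,z) \<in> ?S" if yz: "y \<in> insert n (verts F)" "z \<in> insert n (verts F)" for y z
  proof -
    consider "y = n" "z = n" | "y = n" "z \<in> verts F" | "y \<in> verts F" "z = n" | "y \<in> verts F" "z \<in> verts F"
      using yz by blast
    then show ?thesis
    proof cases
      case 1 then show ?thesis by simp
    next
      case 2 then show ?thesis using xn old[OF x] by (meson rtrancl_trans)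
    next
      case 3 then show ?thesis using xn old[OF _ x] by (meson rtrancl_trans)
    qed (rule old)
  qed
  have noloop: "\<forall>(y,z)\<in>?A. y \<noteq> z \<and> (z,y) \<notin> ?A"
    using ot a n x dF(2) unfolding oriented_tree_def by fastforce
  have "card ?A + 1 = card (insert n (verts F))"
    using ot aF finA dF n unfolding oriented_tree_def by simp
  then show ?thesis using noloop conn dF a x unfolding oriented_tree_def digraph_def by auto
qed

lemma pendant_out:
  assumes "height_le_one F Zs" "x \<in> Zs" "n \<notin> verts F"
  shows "height_le_one (insert n (verts F), insert (x,n) (arcs F)) Zs"
proof -
  have "oriented_tree (insert n (verts F), insert (x,n) (arcs F))"
    using assms by (intro pendant_tree) (auto simp: height_le_one_def)
  then show ?thesis using assms unfolding height_le_one_def by auto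
qed

lemma pendant_in:
  assumes "height_le_one F Zs" "x \<in> verts F - Zs" "n \<notin> verts F"
  shows "height_le_one (insert n (verts F), insert (n,x) (arcs F)) (insert n Zs)"
proof -
  have "oriented_tree (insert n (verts F), insert (n,x) (arcs F))"
    using assms by (intro pendant_tree) (auto simp: height_le_one_def)
  then show ?thesis using assms unfolding height_le_one_def by auto
qed

definition valid :: "nat digraph \<Rightarrow> nat digraph \<Rightarrow> nat set \<Rightarrow> (nat \<Rightarrow> nat) \<Rightarrow> bool" where
  "valid G F Zs \<phi> \<longleftrightarrow> height_le_one F Zs \<and> (\<forall>x\<in>verts F. \<phi> x \<in> verts G) \<and>
     (\<forall>(x,y)\<in>arcs F. (\<phi> x, \<phi> y) \<in> arcs G)"

definition extd :: "nat digraph \<Rightarrow> nat set \<Rightarrow> (nat \<Rightarrow> nat) \<Rightarrow> nat digraph \<Rightarrow> nat set \<Rightarrow> (nat \<Rightarrow> nat) \<Rightarrow> bool" where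
  "extd F Zs \<phi> F' Zs' \<phi>' \<longleftrightarrow> verts F \<subseteq> verts F' \<and> (\<forall>x\<in>verts F. \<phi>' x = \<phi> x \<and> (x \<in> Zs' \<longleftrightarrow> x \<in> Zs))"

lemma extend1:
  assumes dG: "digraph G" and v: "valid G F Zs \<phi>" and x0: "x0 \<in> verts F" "(\<phi> x0, x0 \<in> Zs) = p"
    and pq: "(p,q) \<in> Ecl G"
  shows "\<exists>F' Zs' \<phi>'. valid G F' Zs' \<phi>' \<and> extd F Zs \<phi> F' Zs' \<phi>' \<and> (\<exists>x\<in>verts F'. (\<phi>' x, x \<in> Zs') = q)"
  using pq
proof (induction rule: rtrancl_induct)
  case base
  then show ?case using v x0 unfolding extd_def by blast
next
  case (step y z)
  then obtain F1 Zs1 \<phi>1 x1 where v1: "valid G F1 Zs1 \<phi>1" and e1: "extd F Zs \<phi> F1 Zs1 \<phi>1"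
    and x1: "x1 \<in> verts F1" "(\<phi>1 x1, x1 \<in> Zs1) = y" by blast
  have hl1: "height_le_one F1 Zs1" using v1 unfolding valid_def by auto
  have "finite (verts F1)" using hl1 unfolding height_le_one_def oriented_tree_def digraph_def by auto
  then obtain n where n: "n \<notin> verts F1" using ex_new_if_finite infinite_UNIV_nat by blast
  have Zs1: "Zs1 \<subseteq> verts F1" using hl1 unfolding height_le_one_def by auto
  from step(2) consider "(y,z) \<in> Rg G" | "(z,y) \<in> Rg G" by auto
  then show ?case
  proof cases
    case 1
    then obtain v w where vw: "y = (v,True)" "z = (w,False)" "(v,w) \<in> arcs G" unfolding Rg_def by auto
    have xz: "x1 \<in> Zs1" "\<phi>1 x1 = v" using x1 vw by auto
    define F2 where "F2 = (insert n (verts F1), insert (x1,n) (arcs F1))"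
    define \<phi>2 where "\<phi>2 = \<phi>1(n := w)"
    have wG: "w \<in> verts G" using vw dG unfolding digraph_def by auto
    have x1n: "x1 \<noteq> n" using x1 n by auto
    have aF1: "arcs F1 \<subseteq> verts F1 \<times> verts F1" using hl1 unfolding height_le_one_def oriented_tree_def digraph_def by auto
    have "valid G F2 Zs1 \<phi>2"
      unfolding valid_def
    proof (intro conjI)
      show "height_le_one F2 Zs1" unfolding F2_def by (rule pendant_out[OF hl1 xz(1) n])
      show "\<forall>x\<in>verts F2. \<phi>2 x \<in> verts G" using v1 wG unfolding F2_def \<phi>2_def valid_def by auto
      show "\<forall>(a,b)\<in>arcs F2. (\<phi>2 a, \<phi>2 b) \<in> arcs G"
        using v1 vw xz x1n aF1 n unfolding F2_def \<phi>2_def valid_def by fastforce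
    qed
    moreover have "extd F Zs \<phi> F2 Zs1 \<phi>2" using e1 n unfolding extd_def F2_def \<phi>2_def by auto
    moreover have "n \<in> verts F2" "(\<phi>2 n, n \<in> Zs1) = z" using vw Zs1 n unfolding F2_def \<phi>2_def by auto
    ultimately show ?thesis by blast
  next
    case 2
    then obtain v w where vw: "z = (v,True)" "y = (w,False)" "(v,w) \<in> arcs G" unfolding Rg_def by auto
    have xz: "x1 \<in> verts F1 - Zs1" "\<phi>1 x1 = w" using x1 vw by auto
    define F2 where "F2 = (insert n (verts F1), insert (n,x1) (arcs F1))"
    define \<phi>2 where "\<phi>2 = \<phi>1(n := v)"
    have wG: "v \<in> verts G" using vw dG unfolding digraph_def by auto
    have x1n: "x1 \<noteq> n" using x1 n by auto
    have aF1: "arcs F1 \<subseteq> verts F1 \<times> verts F1" using hl1 unfolding height_le_one_def oriented_tree_def digraph_def by auto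
    have "valid G F2 (insert n Zs1) \<phi>2"
      unfolding valid_def
    proof (intro conjI)
      show "height_le_one F2 (insert n Zs1)" unfolding F2_def by (rule pendant_in[OF hl1 xz(1) n])
      show "\<forall>x\<in>verts F2. \<phi>2 x \<in> verts G" using v1 wG unfolding F2_def \<phi>2_def valid_def by auto
      show "\<forall>(a,b)\<in>arcs F2. (\<phi>2 a, \<phi>2 b) \<in> arcs G"
        using v1 vw xz x1n aF1 n unfolding F2_def \<phi>2_def valid_def by fastforce
    qed
    moreover have "extd F Zs \<phi> F2 (insert n Zs1) \<phi>2" using e1 n unfolding extd_def F2_def \<phi>2_def by auto
    moreover have "n \<in> verts F2" "(\<phi>2 n, n \<in> insert n Zs1) = z" using vw n unfolding F2_def \<phi>2_def by auto
    ultimately show ?thesis by blast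
  qed
qed

lemma cover:
  assumes dG: "digraph G" and fQ: "finite Q" and v0: "v0 \<in> verts G" and Q: "\<forall>q\<in>Q. ((v0,i0),q) \<in> Ecl G"
  shows "\<exists>F Zs \<phi>. valid G F Zs \<phi> \<and> (\<forall>q\<in>insert (v0,i0) Q. \<exists>x\<in>verts F. (\<phi> x, x \<in> Zs) = q)"
  using fQ Q
proof (induction rule: finite_induct)
  case empty
  define F :: "nat digraph" where "F = ({0}, {})"
  define Z :: "nat set" where "Z = (if i0 then {0} else {})"
  have ot: "oriented_tree F" unfolding oriented_tree_def digraph_def F_def by simp
  have "height_le_one F Z" unfolding height_le_one_def using ot by (simp add: F_def Z_def)
  then have "valid G F Z (\<lambda>_. v0)" using v0 unfolding valid_def by (simp add: F_def)
  moreover have "\<forall>q\<in>insert (v0,i0) {}. \<exists>x\<in>verts F. (v0, x \<in> Z) = q" by (simp add: F_def Z_def)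
  ultimately show ?case by blast
next
  case (insert q Q)
  have "\<forall>q\<in>Q. ((v0,i0),q) \<in> Ecl G" using insert.prems by blast
  from insert.IH[OF this] obtain F Zs \<phi> where v: "valid G F Zs \<phi>" and c: "\<forall>q\<in>insert (v0,i0) Q. \<exists>x\<in>verts F. (\<phi> x, x \<in> Zs) = q"
    by blast
  then obtain x0 where x0: "x0 \<in> verts F" "(\<phi> x0, x0 \<in> Zs) = (v0,i0)" by blast
  have "((v0,i0),q) \<in> Ecl G" using insert.prems by blast
  from extend1[OF dG v x0 this] obtain F' Zs' \<phi>' where
    v': "valid G F' Zs' \<phi>'" "extd F Zs \<phi> F' Zs' \<phi>'" "\<exists>x\<in>verts F'. (\<phi>' x, x \<in> Zs') = q" by blast
  have "\<forall>q\<in>insert (v0,i0) (insert q Q). \<exists>x\<in>verts F'. (\<phi>' x, x \<in> Zs') = q"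
  proof
    fix r assume r: "r \<in> insert (v0,i0) (insert q Q)"
    show "\<exists>x\<in>verts F'. (\<phi>' x, x \<in> Zs') = r"
    proof (cases "r = q")
      case True then show ?thesis using v'(3) by blast
    next
      case False
      then have "r \<in> insert (v0,i0) Q" using r by blast
      then obtain x where x: "x \<in> verts F" "(\<phi> x, x \<in> Zs) = r" using c by blast
      then have "x \<in> verts F'" "(\<phi>' x, x \<in> Zs') = r" using v'(2) unfolding extd_def by auto
      then show ?thesis by blast
    qed
  qed
  then show ?case using v'(1) by blast
qed

lemma B2:
  assumes dG: "digraph G" and ot: "oriented_tree T" and hT: "T \<rightarrow>\<^sub>h LG G"
  shows "\<exists>Fu Z vsel. sproink_data T Fu Z vsel \<and> sproink_graph T Fu vsel \<rightarrow>\<^sub>h G"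
proof -
  obtain h where h: "is_hom T (LG G) h" using hT hom_to_def by blast
  have dT: "finite (verts T)" "arcs T \<subseteq> verts T \<times> verts T" using ot unfolding oriented_tree_def digraph_def by auto
  have finA: "finite (arcs T)" using dT finite_subset by blast
  have noloop: "fst e \<noteq> snd e" if "e \<in> arcs T" for e using ot that unfolding oriented_tree_def by auto
  have arcE: "\<exists>v. v\<in>verts G \<and> h (fst e) = Ecl G `` {(v,False)} \<and> h (snd e) = Ecl G `` {(v,True)}"
    if "e \<in> arcs T" for e
  proof -
    have "(h (fst e), h (snd e)) \<in> arcs (LG G)" using h that unfolding is_hom_def by auto
    then show ?thesis unfolding LG_def by auto
  qed
  define ve where "ve e = (SOME v. v\<in>verts G \<and> h (fst e) = Ecl G `` {(v,False)} \<and> h (snd e) = Ecl G `` {(v,True)})" for e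
  have ve: "ve e \<in> verts G" "h (fst e) = Ecl G `` {(ve e,False)}" "h (snd e) = Ecl G `` {(ve e,True)}"
    if "e \<in> arcs T" for e
    using someI_ex[OF arcE[OF that]] unfolding ve_def by auto
  define Q where "Q u = (\<lambda>e. (ve e, False)) ` {e\<in>arcs T. fst e = u} \<union> (\<lambda>e. (ve e, True)) ` {e\<in>arcs T. snd e = u}" for u
  have ex: "\<exists>F Zs \<phi>. valid G F Zs \<phi> \<and> (\<forall>q\<in>Q u. \<exists>x\<in>verts F. (\<phi> x, x \<in> Zs) = q)" if u: "u \<in> verts T" for u
  proof -
    have "h u \<in> verts (LG G)" using h u unfolding is_hom_def by auto
    then obtain v0 i0 where v0: "v0 \<in> verts G" "h u = Ecl G `` {(v0,i0)}" unfolding LG_def by auto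
    have fQ: "finite (Q u)" unfolding Q_def using finA by auto
    have inQ: "\<forall>q\<in>Q u. ((v0,i0),q) \<in> Ecl G"
    proof
      fix q assume "q \<in> Q u"
      then have "q \<in> h u" unfolding Q_def using ve by auto
      then show "((v0,i0),q) \<in> Ecl G" using v0 by simp
    qed
    from cover[OF dG fQ v0(1) inQ] show ?thesis by blast
  qed
  define P where "P u t = (valid G (fst t) (fst (snd t)) (snd (snd t)) \<and>
      (\<forall>q\<in>Q u. \<exists>x\<in>verts (fst t). (snd (snd t) x, x \<in> fst (snd t)) = q))" for u t
  have "\<exists>t. P u t" if "u \<in> verts T" for u using ex[OF that] unfolding P_def by auto
  then obtain t where t: "\<And>u. u \<in> verts T \<Longrightarrow> P u (t u)" by metis
  define Fu where "Fu u = fst (t u)" for u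
  define Zf where "Zf u = fst (snd (t u))" for u
  define \<phi>f where "\<phi>f u = snd (snd (t u))" for u
  have vu: "valid G (Fu u) (Zf u) (\<phi>f u)" and cu: "\<forall>q\<in>Q u. \<exists>x\<in>verts (Fu u). (\<phi>f u x, x \<in> Zf u) = q"
    if "u \<in> verts T" for u using t[OF that] unfolding P_def Fu_def Zf_def \<phi>f_def by auto
  define vsel where "vsel e u = (SOME x. x \<in> verts (Fu u) \<and> \<phi>f u x = ve e \<and> (x \<in> Zf u \<longleftrightarrow> u \<noteq> fst e))" for e u
  have vsel: "vsel e u \<in> verts (Fu u) \<and> \<phi>f u (vsel e u) = ve e \<and> (vsel e u \<in> Zf u \<longleftrightarrow> u \<noteq> fst e)"
    if e: "e \<in> arcs T" and u: "u = fst e \<or> u = snd e" for e u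
  proof -
    have uT: "u \<in> verts T" using u e dT by auto
    have "(ve e, u \<noteq> fst e) \<in> Q u" unfolding Q_def using u e noloop[OF e] by auto
    then obtain x where "x \<in> verts (Fu u)" "(\<phi>f u x, x \<in> Zf u) = (ve e, u \<noteq> fst e)" using cu[OF uT] by blast
    then have "\<exists>x. x \<in> verts (Fu u) \<and> \<phi>f u x = ve e \<and> (x \<in> Zf u \<longleftrightarrow> u \<noteq> fst e)" by auto
    then show ?thesis unfolding vsel_def by (rule someI_ex)
  qed
  have sd: "sproink_data T Fu Zf vsel"
    unfolding sproink_data_def
  proof (intro conjI ballI)
    fix u assume "u \<in> verts T" then show "height_le_one (Fu u) (Zf u)" using vu unfolding valid_def by auto
  next
    fix e assume e: "e \<in> arcs T"
    show "vsel e (fst e) \<in> verts (Fu (fst e)) - Zf (fst e)" using vsel[OF e] by auto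
    show "vsel e (snd e) \<in> Zf (snd e)" using vsel[OF e] noloop[OF e] by auto
  qed
  define R where "R = {((fst e, vsel e (fst e)), (snd e, vsel e (snd e))) | e. e \<in> arcs T}"
  define E where "E = (R \<union> R\<inverse>)\<^sup>*"
  have SG: "sproink_graph T Fu vsel = ({E `` {(u, x)} | u x. u \<in> verts T \<and> x \<in> verts (Fu u)},
       {(E `` {(u, x)}, E `` {(u, y)}) | u x y. u \<in> verts T \<and> (x, y) \<in> arcs (Fu u)})"
    unfolding sproink_graph_def sproink_ident_def Let_def E_def R_def by simp
  define \<Phi> where "\<Phi> p = \<phi>f (fst p) (snd p)" for p
  have resp: "\<Phi> a = \<Phi> b" if "(a,b) \<in> E" for a b
    using that unfolding E_def
  proof (rule resp_cl[rotated])
    fix a b assume "(a,b) \<in> R"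
    then obtain e where e: "e \<in> arcs T" "a = (fst e, vsel e (fst e))" "b = (snd e, vsel e (snd e))"
      unfolding R_def by auto
    then show "\<Phi> a = \<Phi> b" using vsel[OF e(1)] unfolding \<Phi>_def by auto
  qed
  define g where "g C = \<Phi> (SOME p. p \<in> C)" for C
  have gcl: "g (E `` {p}) = \<Phi> p" for p
  proof -
    have "p \<in> E `` {p}" unfolding E_def by simp
    then have "(SOME q. q \<in> E `` {p}) \<in> E `` {p}" by (rule someI)
    then show ?thesis unfolding g_def using resp by auto
  qed
  have "is_hom (sproink_graph T Fu vsel) G g"
    unfolding is_hom_def
  proof safe
    fix C assume "C \<in> verts (sproink_graph T Fu vsel)"
    then obtain u x where ux: "u \<in> verts T" "x \<in> verts (Fu u)" "C = E `` {(u,x)}" unfolding SG by auto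
    then show "g C \<in> verts G" using gcl vu[OF ux(1)] unfolding \<Phi>_def valid_def by auto
  next
    fix C D assume "(C,D) \<in> arcs (sproink_graph T Fu vsel)"
    then obtain u x y where ux: "u \<in> verts T" "(x,y) \<in> arcs (Fu u)" "C = E `` {(u,x)}" "D = E `` {(u,y)}"
      unfolding SG by auto
    then show "(g C, g D) \<in> arcs G" using gcl vu[OF ux(1)] unfolding \<Phi>_def valid_def by auto
  qed
  then show ?thesis using sd unfolding hom_to_def by blast
qed

theorem theorem2p3:
  fixes \<F> :: "'t digraph set" and H :: "'h digraph"
  assumes "digraph H"
    and "\<forall>T\<in>\<F>. oriented_tree T"
    and "complete_obstructions \<F> H"
  shows "complete_obstructions (\<Union>T\<in>\<F>. Sproink T) (arc_graph H)"
  unfolding complete_obstructions_def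
proof (intro allI impI)
  fix G :: "nat digraph" assume dG: "digraph G"
  have dL: "digraph (LG G)" using dG by (rule LG_digraph)
  then have "finite (verts (LG G))" unfolding digraph_def by auto
  then obtain \<iota> :: "(nat \<times> bool) set \<Rightarrow> nat" and m where \<iota>: "inj_on \<iota> (verts (LG G))"
    using finite_imp_inj_to_nat_seg by blast
  let ?N = "map_dg \<iota> (LG G)"
  have dN: "digraph ?N" using dL by (rule map_dg_digraph)
  have obs: "?N \<rightarrow>\<^sub>h H \<longleftrightarrow> \<not> (\<exists>T\<in>\<F>. T \<rightarrow>\<^sub>h ?N)"
    using assms(3) dN unfolding complete_obstructions_def by blast
  have TN: "T \<rightarrow>\<^sub>h ?N \<longleftrightarrow> T \<rightarrow>\<^sub>h LG G" for T :: "'t digraph"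
    using map_dg_into map_dg_from[OF dL \<iota>] by blast
  have SP: "(\<exists>S\<in>(\<Union>T\<in>\<F>. Sproink T). S \<rightarrow>\<^sub>h G) \<longleftrightarrow> (\<exists>T\<in>\<F>. T \<rightarrow>\<^sub>h LG G)"
  proof
    assume "\<exists>S\<in>(\<Union>T\<in>\<F>. Sproink T). S \<rightarrow>\<^sub>h G"
    then obtain T Fu Z vsel where T: "T \<in> \<F>" "sproink_data T Fu Z vsel" "sproink_graph T Fu vsel \<rightarrow>\<^sub>h G"
      unfolding Sproink_def by blast
    have "digraph T" using assms(2) T(1) unfolding oriented_tree_def by auto
    then have "T \<rightarrow>\<^sub>h LG G" using B1 T(2,3) by blast
    then show "\<exists>T\<in>\<F>. T \<rightarrow>\<^sub>h LG G" using T(1) by blast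
  next
    assume "\<exists>T\<in>\<F>. T \<rightarrow>\<^sub>h LG G"
    then obtain T where T: "T \<in> \<F>" "T \<rightarrow>\<^sub>h LG G" by blast
    from B2[OF dG _ T(2)] assms(2) T(1) obtain Fu Z vsel where
      "sproink_data T Fu Z vsel" "sproink_graph T Fu vsel \<rightarrow>\<^sub>h G" by blast
    then show "\<exists>S\<in>(\<Union>T\<in>\<F>. Sproink T). S \<rightarrow>\<^sub>h G" using T(1) unfolding Sproink_def by blast
  qed
  have "G \<rightarrow>\<^sub>h arc_graph H \<longleftrightarrow> LG G \<rightarrow>\<^sub>h H" using lemmaA[OF assms(1) dG] .
  also have "\<dots> \<longleftrightarrow> ?N \<rightarrow>\<^sub>h H" by (rule map_dg_to[OF dL \<iota>, symmetric])
  also have "\<dots> \<longleftrightarrow> \<not> (\<exists>T\<in>\<F>. T \<rightarrow>\<^sub>h LG G)" using obs TN by simp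
  also have "\<dots> \<longleftrightarrow> \<not> (\<exists>S\<in>(\<Union>T\<in>\<F>. Sproink T). S \<rightarrow>\<^sub>h G)" using SP by simp
  finally show "G \<rightarrow>\<^sub>h arc_graph H \<longleftrightarrow> \<not> (\<exists>F\<in>(\<Union>T\<in>\<F>. Sproink T). F \<rightarrow>\<^sub>h G)" .
qed

end
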